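(* Let $L$ be a Lie algebra over $\Phi$ and let $I$ be an ideal of $L$ which is strongly non-degenerate as a Lie algebra. Then: (i) $\mathrm{Ann}_L(I)=\mathrm{QAnn}_L(I)$; (ii) if $\mathrm{Ann}_L(I)=0$, then $L$ is strongly non-degenerate.
   Context: $\Phi$ is a unital commutative ring in which $2$ and $3$ are invertible; all algebras are $\Phi$-modules. An element $x$ of a Lie algebra $M$ is an absolute zero divisor if $[x,[x,M]]=0$; $M$ is strongly non-degenerate if it has no non-zero absolute zero divisors. For subsets $X,Y$ of a Lie algebra, $\mathrm{Ann}_X(Y)=\{x\in X: [x,Y]=0\}$ and $\mathrm{QAnn}_X(Y)=\{x\in X: [x,[x,Y]]=0\}$. *)

theory Defs
  imports Main
begin

text \<open>A Lie algebra over a commutative ring 'r: the carrier is the whole type 'a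
  (an abelian group), with scalar multiplication smul and bracket br.\<close>

definition lie_algebra :: "('r::comm_ring_1 \<Rightarrow> 'a::ab_group_add \<Rightarrow> 'a) \<Rightarrow> ('a \<Rightarrow> 'a \<Rightarrow> 'a) \<Rightarrow> bool" where
  "lie_algebra smul br \<longleftrightarrow>
     (\<forall>r x y. smul r (x + y) = smul r x + smul r y) \<and>
     (\<forall>r s x. smul (r + s) x = smul r x + smul s x) \<and>
     (\<forall>r s x. smul (r * s) x = smul r (smul s x)) \<and>
     (\<forall>x. smul 1 x = x) \<and>
     (\<forall>x y z. br (x + y) z = br x z + br y z) \<and>
     (\<forall>x y z. br x (y + z) = br x y + br x z) \<and>
     (\<forall>r x y. br (smul r x) y = smul r (br x y)) \<and>
     (\<forall>r x y. br x (smul r y) = smul r (br x y)) \<and>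
     (\<forall>x. br x x = 0) \<and>
     (\<forall>x y z. br x (br y z) + br y (br z x) + br z (br x y) = 0)"

definition lie_ideal :: "('r::comm_ring_1 \<Rightarrow> 'a::ab_group_add \<Rightarrow> 'a) \<Rightarrow> ('a \<Rightarrow> 'a \<Rightarrow> 'a) \<Rightarrow> 'a set \<Rightarrow> bool" where
  "lie_ideal smul br I \<longleftrightarrow>
     0 \<in> I \<and>
     (\<forall>x\<in>I. \<forall>y\<in>I. x + y \<in> I) \<and>
     (\<forall>x\<in>I. - x \<in> I) \<and>
     (\<forall>r. \<forall>x\<in>I. smul r x \<in> I) \<and>
     (\<forall>x. \<forall>y\<in>I. br x y \<in> I)"

definition Ann :: "('a \<Rightarrow> 'a \<Rightarrow> 'a::zero) \<Rightarrow> 'a set \<Rightarrow> 'a set \<Rightarrow> 'a set" where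
  "Ann br X Y = {x \<in> X. \<forall>y\<in>Y. br x y = 0}"

definition QAnn :: "('a \<Rightarrow> 'a \<Rightarrow> 'a::zero) \<Rightarrow> 'a set \<Rightarrow> 'a set \<Rightarrow> 'a set" where
  "QAnn br X Y = {x \<in> X. \<forall>y\<in>Y. br x (br x y) = 0}"

definition abs_zero_divisor :: "('a \<Rightarrow> 'a \<Rightarrow> 'a::zero) \<Rightarrow> 'a set \<Rightarrow> 'a \<Rightarrow> bool" where
  "abs_zero_divisor br M x \<longleftrightarrow> x \<in> M \<and> (\<forall>y\<in>M. br x (br x y) = 0)"

definition strongly_nondeg :: "('a \<Rightarrow> 'a \<Rightarrow> 'a::zero) \<Rightarrow> 'a set \<Rightarrow> bool" where
  "strongly_nondeg br M \<longleftrightarrow> (\<forall>x. abs_zero_divisor br M x \<longrightarrow> x = 0)"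

end

theory Submission
  imports Defs
begin

locale LA =
  fixes br :: "'a::ab_group_add \<Rightarrow> 'a \<Rightarrow> 'a"
  assumes addL: "br (x + y) z = br x z + br y z"
    and addR: "br x (y + z) = br x y + br x z"
    and alt: "br x x = 0"
    and jac: "br x (br y z) + br y (br z x) + br z (br x y) = 0"
begin

lemma zeroL[simp]: "br 0 y = 0"
  using addL[of 0 0 y] by simp

lemma zeroR[simp]: "br x 0 = 0"
  using addR[of x 0 0] by simp

lemma negL: "br (- x) y = - br x y"
  using addL[of x "-x" y] by (simp add: eq_neg_iff_add_eq_0 add.commute)

lemma negR: "br x (- y) = - br x y"
  using addR[of x y "-y"] by (simp add: eq_neg_iff_add_eq_0 add.commute)

lemma anti: "br y x = - br x y"
proof -
  have "br (x + y) (x + y) = 0" by (rule alt)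
  hence "br x x + br y x + (br x y + br y y) = 0" by (simp add: addL addR)
  thus ?thesis by (simp add: alt eq_neg_iff_add_eq_0 add.commute)
qed

lemma leib: "br x (br u v) = br (br x u) v + br u (br x v)"
proof -
  have j: "br x (br u v) + br u (br v x) + br v (br x u) = 0" by (rule jac)
  have a1: "br u (br v x) = - br u (br x v)" using anti[of x v] negR by simp
  have a2: "br v (br x u) = - br (br x u) v" using anti[of v "br x u"] by simp
  from j a1 a2 show ?thesis by (simp add: algebra_simps eq_neg_iff_add_eq_0)
qed

end

locale SW = LA br for br :: "'a::ab_group_add \<Rightarrow> 'a \<Rightarrow> 'a" +
  fixes I :: "'a set" and x :: 'a
  assumes I0: "0 \<in> I"
    and Iadd: "p \<in> I \<Longrightarrow> q \<in> I \<Longrightarrow> p + q \<in> I"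
    and Ineg: "p \<in> I \<Longrightarrow> - p \<in> I"
    and Ibr: "q \<in> I \<Longrightarrow> br p q \<in> I"
    and half: "z + z = 0 \<Longrightarrow> z = 0"
    and third: "z + z + z = 0 \<Longrightarrow> z = 0"
    and hx: "u \<in> I \<Longrightarrow> br x (br x u) = 0"
    and nd: "z \<in> I \<Longrightarrow> (\<And>c. c \<in> I \<Longrightarrow> br z (br z c) = 0) \<Longrightarrow> z = 0"
begin

abbreviation D where "D u \<equiv> br x u"
definition T where "T p q r = br (D p) (br (D q) r)"

lemma DI: "p \<in> I \<Longrightarrow> D p \<in> I" by (rule Ibr)

lemma Ibr2: "p \<in> I \<Longrightarrow> br p q \<in> I"
  using Ineg[OF Ibr[of p q]] anti[of q p] by simp

lemma Dbr: "D (br p q) = br (D p) q + br p (D q)"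
  by (rule leib)

lemma F1: assumes "p \<in> I" "q \<in> I" shows "br (D p) (D q) = 0"
proof -
  have "D (D (br p q)) = 0" using hx Ibr assms by blast
  moreover have "D (D (br p q)) = br (D (D p)) q + br (D p) (D q) + (br (D p) (D q) + br p (D (D q)))"
    using Dbr[of p q] Dbr[of "D p" q] Dbr[of p "D q"] addR[of x "br (D p) q" "br p (D q)"] by simp
  ultimately have "br (D p) (D q) + br (D p) (D q) = 0" using hx assms by simp
  thus ?thesis by (rule half)
qed

lemma F2: assumes "p \<in> I" "q \<in> I" shows "D (br (D p) q) = 0"
  using Dbr[of "D p" q] hx[OF assms(1)] F1[OF assms] by simp

lemma F3: assumes "p \<in> I" "q \<in> I" "r \<in> I" shows "T p q r = D (br p (br (D q) r))"
  using Dbr[of p "br (D q) r"] F2[OF assms(2,3)] by (simp add: T_def)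

lemma F4: assumes "p \<in> I" "q \<in> I" shows "T p q r = T q p r"
  using leib[of "D p" "D q" r] F1[OF assms] by (simp add: T_def)

lemma F5: assumes "p \<in> I" "q \<in> I" "r \<in> I" shows "T p q r = T p r q"
proof -
  have "br (D p) (D (br q r)) = 0" using F1 assms Ibr by blast
  hence "br (D p) (br (D q) r) + br (D p) (br q (D r)) = 0"
    using Dbr[of q r] addR[of "D p" "br (D q) r" "br q (D r)"] by simp
  moreover have "br q (D r) = - br (D r) q" by (rule anti)
  ultimately show ?thesis by (simp add: T_def negR eq_neg_iff_add_eq_0)
qed

lemma F6: assumes "p \<in> I" "q \<in> I" "r \<in> I" shows "T p q r = T r p q"
  using F4 F5 assms by metis


lemma stepA: assumes a: "a \<in> I" and e: "e \<in> I"
  shows "br (br (D a) (br (D a) a)) (br (D a) e) = 0"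
proof -
  define y where "y = D a"
  define n where "n = br y e"
  define u where "u = br y a"
  define t where "t = br y n"
  define s where "s = br y u"
  define ws where "ws = br a (br (D a) a)"
  have yI: "y \<in> I" using DI a y_def by simp
  have uI: "u \<in> I" using Ibr a u_def by simp
  have wsI: "ws \<in> I" using Ibr2 a ws_def by simp
  have sws: "s = D ws" using F3[OF a a a] by (simp add: T_def s_def u_def y_def ws_def)
  have e1: "br t u = br y (br n u) - br n s"
    using leib[of y n u] by (simp add: t_def s_def)
  have e2: "br y (br e u) = br n u + br e s"
    using leib[of y e u] by (simp add: n_def s_def)
  have Du: "D u = 0" using F2[OF a a] by (simp add: u_def y_def)
  have Deu: "D (br e u) = t"
  proof -
    have "D (br e u) = br (D e) u" using Dbr[of e u] Du by simp
    also have "\<dots> = T e a a" by (simp add: T_def u_def y_def)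
    also have "\<dots> = T a a e" using F6[OF a a e] by simp
    also have "\<dots> = t" by (simp add: T_def t_def n_def y_def)
    finally show ?thesis .
  qed
  have euI: "br e u \<in> I" using Ibr2 e by simp
  have e3: "br y (br y (br e u)) = br t u"
  proof -
    have "br y (br y (br e u)) = T a a (br e u)" by (simp add: T_def y_def)
    also have "\<dots> = T (br e u) a a" using F6[OF a a euI] by simp
    also have "\<dots> = br (D (br e u)) u" by (simp add: T_def u_def y_def)
    also have "\<dots> = br t u" by (simp only: Deu)
    finally show ?thesis .
  qed
  have e4: "br y (br e s) = - br s n"
  proof -
    have "br e s = - br s e" by (rule anti)
    hence "br y (br e s) = - br y (br s e)" by (simp add: negR)
    also have "br y (br s e) = T a ws e" by (simp add: T_def y_def sws)
    also have "\<dots> = T ws a e" using F4[OF a wsI] by simp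
    also have "\<dots> = br s n" by (simp add: T_def sws n_def y_def)
    finally show ?thesis .
  qed
  have e5: "br y (br n u) = br t u + br s n"
  proof -
    have "br y (br y (br e u)) = br y (br n u) + br y (br e s)"
      using e2 addR by simp
    thus ?thesis using e3 e4 by (simp add: algebra_simps)
  qed
  have "br n s = - br s n" by (rule anti)
  with e1 e5 have "br s n + br s n = 0" by (simp add: algebra_simps)
  hence "br s n = 0" by (rule half)
  thus ?thesis by (simp add: s_def u_def y_def n_def)
qed

lemma stepB: assumes a: "a \<in> I"
  shows "br (D a) (br (D a) a) = 0"
proof -
  define y where "y = D a"
  define u where "u = br y a"
  define s where "s = br y u"
  define ws where "ws = br a (br (D a) a)"
  have uI: "u \<in> I" using Ibr a u_def by simp
  have sI: "s \<in> I" using Ibr uI s_def by simp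
  have wsI: "ws \<in> I" using Ibr2 a ws_def by simp
  have sws: "s = D ws" using F3[OF a a a] by (simp add: T_def s_def u_def y_def ws_def)
  show ?thesis unfolding y_def[symmetric] u_def[symmetric] s_def[symmetric]
  proof (rule nd[OF sI])
    fix e assume e: "e \<in> I"
    define v where "v = br s e"
    have ys: "br y s = 0" using F1[OF a wsI] by (simp add: y_def sws)
    have sye: "br s (br y e) = 0" using stepA[OF a e] by (simp add: s_def u_def y_def)
    have yv: "br y v = 0" using leib[of y s e] ys sye by (simp add: v_def)
    have uv: "br u v = br y (br a v)" using leib[of y a v] yv by (simp add: u_def)
    have Dv: "D v = 0"
    proof -
      have "D s = 0" using hx[OF wsI] by (simp add: sws)
      moreover have "br s (D e) = 0" using F1[OF wsI e] by (simp add: sws)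
      ultimately show ?thesis using Dbr[of s e] by (simp add: v_def)
    qed
    have Dav: "D (br a v) = 0" using Dbr[of a v] Dv yv by (simp add: y_def)
    have avI: "br a v \<in> I" using Ibr2 a by simp
    have "br y (br u v) = T a a (br a v)" by (simp add: uv T_def y_def)
    also have "\<dots> = T (br a v) a a" using F6[OF a a avI] by simp
    also have "\<dots> = 0" by (simp add: T_def Dav)
    finally have yuv: "br y (br u v) = 0" .
    have "br s v = br y (br u v) - br u (br y v)"
      using leib[of y u v] by (simp add: s_def)
    thus "br s (br s e) = 0" using yuv yv by (simp add: v_def)
  qed
qed

lemma T_addL: "T (p + q) r w = T p r w + T q r w" by (simp add: T_def addR addL)
lemma T_addM: "T p (q + r) w = T p q w + T p r w" by (simp add: T_def addR addL)
lemma T_addR: "T p q (r + w) = T p q r + T p q w" by (simp add: T_def addR addL)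
lemma T_negL: "T (- p) r w = - T p r w" by (simp add: T_def negR negL)
lemma T_negM: "T p (- r) w = - T p r w" by (simp add: T_def negR negL)
lemma T_negR: "T p r (- w) = - T p r w" by (simp add: T_def negR negL)

lemma sixth: "(z::'a) + z + z + z + z + z = 0 \<Longrightarrow> z = 0"
proof -
  assume "z + z + z + z + z + z = 0"
  moreover have "z + z + z + z + z + z = (z + z) + (z + z) + (z + z)" by (simp only: add.assoc)
  ultimately have "(z + z) + (z + z) + (z + z) = 0" by simp
  hence "z + z = 0" by (rule third)
  thus "z = 0" by (rule half)
qed

lemma stepC: assumes a: "a \<in> I" and c: "c \<in> I" shows "T a a c = 0"
proof -
  have aaa: "\<And>p. p \<in> I \<Longrightarrow> T p p p = 0" using stepB by (simp add: T_def)
  have nc: "- c \<in> I" using Ineg c by simp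
  have acI: "a + c \<in> I" "a + - c \<in> I" using Iadd[OF a c] Iadd[OF a nc] by auto
  have s1: "T a c a = T a a c" "T c a a = T a a c" using F5[OF a a c] F6[OF a a c] by auto
  have s2: "T c a c = T a c c" "T c c a = T a c c" using F4[OF c a] F6[OF a c c] F5[OF c c a] by auto
  have "T (a + c) (a + c) (a + c) = 0" using aaa acI by blast
  hence E1: "T a a c + T a a c + T a a c + (T a c c + T a c c + T a c c) = 0"
    using aaa[OF a] aaa[OF c] s1 s2 by (simp add: T_addL T_addM T_addR algebra_simps)
  have "T (a + - c) (a + - c) (a + - c) = 0" using aaa acI by blast
  hence "T a a a + T (- c) a a + (T a (- c) a + T (- c) (- c) a) + (T a a (- c) + T (- c) a (- c) + (T a (- c) (- c) + T (- c) (- c) (- c))) = 0"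
    unfolding T_addL T_addM T_addR .
  hence E2: "- (T a a c + T a a c + T a a c) + (T a c c + T a c c + T a c c) = 0"
    unfolding T_negL T_negM T_negR using aaa[OF a] aaa[OF c] s1 s2
    by (simp add: algebra_simps)
  from E1 E2 have "T a a c + T a a c + T a a c + T a a c + T a a c + T a a c = 0"
    by (simp add: algebra_simps)
  thus ?thesis by (rule sixth)
qed

lemma main: assumes a: "a \<in> I" shows "D a = 0"
proof (rule nd)
  show "D a \<in> I" using DI a .
  fix c assume "c \<in> I"
  thus "br (D a) (br (D a) c) = 0" using stepC[OF a] by (simp add: T_def)
qed

end

lemma scal_inv:
  fixes smul :: "'r::comm_ring_1 \<Rightarrow> 'a::ab_group_add \<Rightarrow> 'a"
  assumes L: "lie_algebra smul br" and k: "(k::'r) * w = 1"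
    and z: "smul k z = 0"
  shows "z = (0::'a)"
proof -
  have m: "\<And>r s x. smul (r * s) x = smul r (smul s x)" and o: "\<And>x. smul 1 x = x"
    and ad: "\<And>r x y. smul r (x + y) = smul r x + smul r y"
    using L by (simp_all add: lie_algebra_def)
  have z0: "\<And>r. smul r 0 = 0" using ad[of _ 0 0] by simp
  have "z = smul (w * k) z" using o k by (simp add: mult.commute)
  also have "\<dots> = 0" using m z z0 by simp
  finally show ?thesis .
qed

theorem proposition2p3:
  fixes smul :: "'r::comm_ring_1 \<Rightarrow> 'a::ab_group_add \<Rightarrow> 'a"
    and br :: "'a \<Rightarrow> 'a \<Rightarrow> 'a"
    and I :: "'a set"
  assumes two_inv: "\<exists>u::'r. 2 * u = 1"
    and three_inv: "\<exists>u::'r. 3 * u = 1"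
    and L: "lie_algebra smul br"
    and I: "lie_ideal smul br I"
    and snd: "strongly_nondeg br I"
  shows "Ann br UNIV I = QAnn br UNIV I \<and>
         (Ann br UNIV I = {0} \<longrightarrow> strongly_nondeg br UNIV)"
proof -
  have sadd: "\<And>r s x. smul (r + s) x = smul r x + smul s x" and o: "\<And>x. smul 1 x = x"
    using L by (simp_all add: lie_algebra_def)
  interpret LA br using L by unfold_locales (simp_all add: lie_algebra_def)
  have half: "\<And>z::'a. z + z = 0 \<Longrightarrow> z = 0"
  proof -
    fix z :: 'a assume h: "z + z = 0"
    obtain w :: 'r where w: "2 * w = 1" using two_inv by blast
    have two: "(2::'r) = 1 + 1" by simp
    have "smul 2 z = z + z" unfolding two by (simp only: sadd o)
    thus "z = 0" using scal_inv[OF L w] h by simp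
  qed
  have third: "\<And>z::'a. z + z + z = 0 \<Longrightarrow> z = 0"
  proof -
    fix z :: 'a assume h: "z + z + z = 0"
    obtain w :: 'r where w: "3 * w = 1" using three_inv by blast
    have e3: "(3::'r) = 1 + 1 + 1" by simp
    have "smul 3 z = z + z + z" unfolding e3 by (simp only: sadd o)
    thus "z = 0" using scal_inv[OF L w] h by simp
  qed
  have Iprops: "0 \<in> I" "\<And>p q. p \<in> I \<Longrightarrow> q \<in> I \<Longrightarrow> p + q \<in> I" "\<And>p. p \<in> I \<Longrightarrow> - p \<in> I"
    "\<And>p q. q \<in> I \<Longrightarrow> br p q \<in> I"
    using I by (simp_all add: lie_ideal_def)
  have nd: "\<And>z. z \<in> I \<Longrightarrow> (\<And>c. c \<in> I \<Longrightarrow> br z (br z c) = 0) \<Longrightarrow> z = 0"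
    using snd unfolding strongly_nondeg_def abs_zero_divisor_def by blast
  have QA: "QAnn br UNIV I \<subseteq> Ann br UNIV I"
  proof
    fix x assume "x \<in> QAnn br UNIV I"
    hence hx: "\<And>u. u \<in> I \<Longrightarrow> br x (br x u) = 0" unfolding QAnn_def by blast
    interpret SW br I x
      by unfold_locales (fact Iprops half third hx nd)+
    show "x \<in> Ann br UNIV I" unfolding Ann_def using main by blast
  qed
  have AQ: "Ann br UNIV I \<subseteq> QAnn br UNIV I"
    unfolding Ann_def QAnn_def by auto
  have eq: "Ann br UNIV I = QAnn br UNIV I" using QA AQ by blast
  show ?thesis
  proof (intro conjI impI)
    show "Ann br UNIV I = QAnn br UNIV I" by (rule eq)
    assume A0: "Ann br UNIV I = {0}"
    show "strongly_nondeg br UNIV"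
      unfolding strongly_nondeg_def abs_zero_divisor_def
    proof (intro allI impI)
      fix z assume "z \<in> UNIV \<and> (\<forall>y\<in>UNIV. br z (br z y) = 0)"
      hence "z \<in> QAnn br UNIV I" unfolding QAnn_def by blast
      thus "z = 0" using eq A0 by blast
    qed
  qed
qed

end
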